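(* The space $\widetilde{l_1}$ has the Schur property, i.e., every weakly null sequence in $\widetilde{l_1}$ converges to $0$ in norm.
   Context: For a real sequence $a=(a_n)_{n\ge1}$ let $\widetilde{a_n}=\sup_{k\ge n}|a_k|$. The Tandori sequence space $\widetilde{l_1}$ is the space of sequences $a$ with $\|a\|_{\widetilde{l_1}}=\sum_{n=1}^\infty\widetilde{a_n}<\infty$. *)

theory Defs
  imports "HOL-Analysis.Analysis"
begin

text \<open>Sequences are indexed from 0 (a shift of the paper's indexing from 1).\<close>

definition tilde :: "(nat \<Rightarrow> real) \<Rightarrow> nat \<Rightarrow> real" where
  "tilde a n = (SUP k\<in>{n..}. \<bar>a k\<bar>)"

definition tandori_norm :: "(nat \<Rightarrow> real) \<Rightarrow> real" where
  "tandori_norm a = (\<Sum>n. tilde a n)"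

definition tandori_space :: "(nat \<Rightarrow> real) set" where
  "tandori_space = {a. bdd_above (range (\<lambda>k. \<bar>a k\<bar>)) \<and> summable (tilde a)}"

definition tandori_dual :: "((nat \<Rightarrow> real) \<Rightarrow> real) set" where
  "tandori_dual = {\<phi>.
     (\<forall>a\<in>tandori_space. \<forall>b\<in>tandori_space. \<phi> (\<lambda>k. a k + b k) = \<phi> a + \<phi> b) \<and>
     (\<forall>c. \<forall>a\<in>tandori_space. \<phi> (\<lambda>k. c * a k) = c * \<phi> a) \<and>
     (\<exists>C. \<forall>a\<in>tandori_space. \<bar>\<phi> a\<bar> \<le> C * tandori_norm a)}"

definition tandori_weakly_null :: "(nat \<Rightarrow> nat \<Rightarrow> real) \<Rightarrow> bool" where
  "tandori_weakly_null x \<longleftrightarrow> (\<forall>j. x j \<in> tandori_space) \<and>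
     (\<forall>\<phi>\<in>tandori_dual. (\<lambda>j. \<phi> (x j)) \<longlonglongrightarrow> 0)"

end

theory Submission
  imports Defs
begin

lemma sp_bdd: "a \<in> tandori_space \<Longrightarrow> bdd_above ((\<lambda>k. \<bar>a k\<bar>) ` {n..})"
  unfolding tandori_space_def by (auto intro: bdd_above_mono)

lemma sp_summable: "a \<in> tandori_space \<Longrightarrow> summable (tilde a)"
  unfolding tandori_space_def by auto

lemma tilde_ge: "a \<in> tandori_space \<Longrightarrow> n \<le> k \<Longrightarrow> \<bar>a k\<bar> \<le> tilde a n"
  unfolding tilde_def by (rule cSUP_upper) (auto simp: sp_bdd)

lemma tilde_nonneg: "a \<in> tandori_space \<Longrightarrow> 0 \<le> tilde a n"
  using tilde_ge[of a n n] by linarith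

lemma tilde_mono: "a \<in> tandori_space \<Longrightarrow> m \<le> n \<Longrightarrow> tilde a n \<le> tilde a m"
  unfolding tilde_def by (rule cSUP_subset_mono) (auto simp: sp_bdd)

lemma tilde_witness: "a \<in> tandori_space \<Longrightarrow> \<exists>k\<ge>n. tilde a n / 2 \<le> \<bar>a k\<bar>"
proof -
  assume a: "a \<in> tandori_space"
  show ?thesis
  proof (cases "tilde a n > 0")
    case True
    then have "tilde a n / 2 < (SUP k\<in>{n..}. \<bar>a k\<bar>)" by (simp add: tilde_def)
    moreover have "(tilde a n / 2 < (SUP k\<in>{n..}. \<bar>a k\<bar>)) = (\<exists>k\<in>{n..}. tilde a n / 2 < \<bar>a k\<bar>)"
      by (rule less_cSUP_iff) (auto simp: sp_bdd[OF a])
    ultimately obtain k where "k \<in> {n..}" "tilde a n / 2 < \<bar>a k\<bar>" by blast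
    then show ?thesis by auto
  next
    case False
    then show ?thesis by (intro exI[of _ n]) auto
  qed
qed

lemma norm_ge_partial: "a \<in> tandori_space \<Longrightarrow> (\<Sum>n<N. tilde a n) \<le> tandori_norm a"
  unfolding tandori_norm_def
  by (rule sum_le_suminf) (auto simp: sp_summable tilde_nonneg)

lemma coord_le_norm: "a \<in> tandori_space \<Longrightarrow> \<bar>a k\<bar> \<le> tandori_norm a"
proof -
  assume a: "a \<in> tandori_space"
  have "\<bar>a k\<bar> \<le> tilde a k" using tilde_ge[OF a] by simp
  also have "\<dots> \<le> (\<Sum>n<Suc k. tilde a n)"
    by (rule member_le_sum) (auto simp: tilde_nonneg[OF a])
  also have "\<dots> \<le> tandori_norm a" by (rule norm_ge_partial[OF a])
  finally show ?thesis .
qed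


lemma func_dual:
  assumes c: "\<And>n. \<bar>c n\<bar> \<le> 1" and k: "\<And>n. n \<le> \<kappa> n"
  shows "(\<lambda>a. \<Sum>n. c n * a (\<kappa> n)) \<in> tandori_dual"
    and "a \<in> tandori_space \<Longrightarrow> \<bar>c n * a (\<kappa> n)\<bar> \<le> tilde a n"
    and "a \<in> tandori_space \<Longrightarrow> summable (\<lambda>n. c n * a (\<kappa> n))"
proof -
  have B: "\<bar>c n * a (\<kappa> n)\<bar> \<le> tilde a n" if a: "a \<in> tandori_space" for a n
  proof -
    have "\<bar>c n * a (\<kappa> n)\<bar> = \<bar>c n\<bar> * \<bar>a (\<kappa> n)\<bar>" by (simp add: abs_mult)
    also have "\<dots> \<le> 1 * tilde a n"
      by (rule mult_mono) (auto simp: c tilde_ge[OF a k] tilde_nonneg[OF a])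
    finally show ?thesis by simp
  qed
  have S: "summable (\<lambda>n. c n * a (\<kappa> n))" if a: "a \<in> tandori_space" for a
    by (rule summable_comparison_test[of _ "tilde a"]) (use B[OF a] sp_summable[OF a] in auto)
  show "a \<in> tandori_space \<Longrightarrow> \<bar>c n * a (\<kappa> n)\<bar> \<le> tilde a n" by (rule B)
  show "a \<in> tandori_space \<Longrightarrow> summable (\<lambda>n. c n * a (\<kappa> n))" by (rule S)
  show "(\<lambda>a. \<Sum>n. c n * a (\<kappa> n)) \<in> tandori_dual"
    unfolding tandori_dual_def
  proof (intro CollectI conjI ballI allI exI[of _ 1])
    fix a b assume a: "a \<in> tandori_space" and b: "b \<in> tandori_space"
    show "(\<Sum>n. c n * (a (\<kappa> n) + b (\<kappa> n))) = (\<Sum>n. c n * a (\<kappa> n)) + (\<Sum>n. c n * b (\<kappa> n))"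
      using suminf_add[OF S[OF a] S[OF b]] by (simp add: distrib_left)
  next
    fix r a assume a: "a \<in> tandori_space"
    show "(\<Sum>n. c n * (r * a (\<kappa> n))) = r * (\<Sum>n. c n * a (\<kappa> n))"
      using suminf_mult[OF S[OF a], of r] by (simp add: algebra_simps)
  next
    fix a assume a: "a \<in> tandori_space"
    have "\<bar>\<Sum>n. c n * a (\<kappa> n)\<bar> \<le> (\<Sum>n. tilde a n)"
    proof -
      have sa: "summable (\<lambda>n. \<bar>c n * a (\<kappa> n)\<bar>)"
        by (rule summable_comparison_test[of _ "tilde a"]) (use B[OF a] sp_summable[OF a] in auto)
      have "\<bar>\<Sum>n. c n * a (\<kappa> n)\<bar> \<le> (\<Sum>n. \<bar>c n * a (\<kappa> n)\<bar>)"
        by (rule summable_rabs[OF sa])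
      also have "\<dots> \<le> (\<Sum>n. tilde a n)"
        by (rule suminf_le) (use B[OF a] sa sp_summable[OF a] in auto)
      finally show ?thesis .
    qed
    then show "\<bar>\<Sum>n. c n * a (\<kappa> n)\<bar> \<le> 1 * tandori_norm a" by (simp add: tandori_norm_def)
  qed
qed

lemma coord_dual: "(\<lambda>a. a k) \<in> tandori_dual"
  unfolding tandori_dual_def
  by (intro CollectI conjI ballI allI exI[of _ 1]) (auto simp: coord_le_norm)

lemma choice2: "(\<And>a b. \<exists>c. P a b c) \<Longrightarrow> \<exists>f. \<forall>a b. P a b (f a b)"
  by (intro exI[of _ "\<lambda>a b. SOME c. P a b c"] allI) (blast intro: someI_ex)

lemma choice3: "(\<And>a b d. \<exists>c. P a b d c) \<Longrightarrow> \<exists>f. \<forall>a b d. P a b d (f a b d)"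
  by (intro exI[of _ "\<lambda>a b d. SOME c. P a b d c"] allI) (blast intro: someI_ex)

lemma gliding_hump:
  assumes sp: "\<And>j. x j \<in> tandori_space"
    and coord: "\<And>k. (\<lambda>j. x j k) \<longlonglongrightarrow> 0"
    and dpos: "\<delta> > 0"
    and H: "\<And>N J. \<exists>j M c \<kappa>. J \<le> j \<and> N < M \<and> (\<forall>n. \<bar>c n\<bar> \<le> 1) \<and> (\<forall>n. n \<le> \<kappa> n) \<and>
              \<delta> \<le> (\<Sum>n\<in>{N..<M}. c n * x j (\<kappa> n))"
  shows "\<exists>\<phi>\<in>tandori_dual. \<not> (\<lambda>j. \<phi> (x j)) \<longlonglongrightarrow> 0"
proof -
  obtain jf Mf cf kf where HF: "\<And>N J. J \<le> jf N J \<and> N < Mf N J \<and> (\<forall>n. \<bar>cf N J n\<bar> \<le> 1) \<and> (\<forall>n. n \<le> kf N J n) \<and>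
              \<delta> \<le> (\<Sum>n\<in>{N..<Mf N J}. cf N J n * x (jf N J) (kf N J n))"
  proof -
    have "\<exists>F. \<forall>N J. J \<le> fst (F N J) \<and> N < fst (snd (F N J)) \<and> (\<forall>n. \<bar>fst (snd (snd (F N J))) n\<bar> \<le> 1) \<and> (\<forall>n. n \<le> snd (snd (snd (F N J))) n) \<and>
              \<delta> \<le> (\<Sum>n\<in>{N..<fst (snd (F N J))}. fst (snd (snd (F N J))) n * x (fst (F N J)) (snd (snd (snd (F N J))) n))"
    proof (rule choice2)
      fix N J
      show "\<exists>q. J \<le> fst q \<and> N < fst (snd q) \<and> (\<forall>n. \<bar>fst (snd (snd q)) n\<bar> \<le> 1) \<and> (\<forall>n. n \<le> snd (snd (snd q)) n) \<and>
              \<delta> \<le> (\<Sum>n\<in>{N..<fst (snd q)}. fst (snd (snd q)) n * x (fst q) (snd (snd (snd q)) n))"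
        using H[where N=N and J=J] by auto
    qed
    then obtain F where F: "\<forall>N J. J \<le> fst (F N J) \<and> N < fst (snd (F N J)) \<and> (\<forall>n. \<bar>fst (snd (snd (F N J))) n\<bar> \<le> 1) \<and> (\<forall>n. n \<le> snd (snd (snd (F N J))) n) \<and>
              \<delta> \<le> (\<Sum>n\<in>{N..<fst (snd (F N J))}. fst (snd (snd (F N J))) n * x (fst (F N J)) (snd (snd (snd (F N J))) n))"
      by blast
    show ?thesis
      by (rule that[of "\<lambda>N J. fst (F N J)" "\<lambda>N J. fst (snd (F N J))" "\<lambda>N J. fst (snd (snd (F N J)))" "\<lambda>N J. snd (snd (snd (F N J)))"])
         (use F in blast)
  qed
  have "\<exists>Jf. \<forall>N C K. N \<le> Jf N C K \<and> (\<forall>j\<ge>Jf N C K. \<bar>\<Sum>n<N. C n * x j (K n)\<bar> < \<delta>/4)"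
  proof (rule choice3)
    fix N and C :: "nat \<Rightarrow> real" and K
    show "\<exists>J. N \<le> J \<and> (\<forall>j\<ge>J. \<bar>\<Sum>n<N. C n * x j (K n)\<bar> < \<delta>/4)"
  proof -
    have "(\<lambda>j. \<Sum>n<N. C n * x j (K n)) \<longlonglongrightarrow> 0"
      by (rule tendsto_null_sum) (auto intro: tendsto_mult_right_zero coord)
    then obtain no where "\<forall>j\<ge>no. norm ((\<Sum>n<N. C n * x j (K n)) - 0) < \<delta>/4"
      using dpos unfolding LIMSEQ_iff by (metis zero_less_divide_iff zero_less_numeral)
    then show ?thesis by (intro exI[of _ "max N no"]) auto
  qed
  qed
  then obtain Jf where JF: "\<And>N C K. N \<le> Jf N C K \<and> (\<forall>j\<ge>Jf N C K. \<bar>\<Sum>n<N. C n * x j (K n)\<bar> < \<delta>/4)"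
    by blast
  have "\<exists>Nf. \<forall>j M. M \<le> Nf j M \<and> (\<Sum>i. tilde (x j) (i + Nf j M)) < \<delta>/4"
  proof (rule choice2)
    fix j M
    show "\<exists>N'. M \<le> N' \<and> (\<Sum>i. tilde (x j) (i + N')) < \<delta>/4"
  proof -
    obtain N where "\<forall>n\<ge>N. norm (\<Sum>i. tilde (x j) (i + n)) < \<delta>/4"
      using suminf_exist_split[of "\<delta>/4" "tilde (x j)"] dpos sp_summable[OF sp] by auto
    then have "\<bar>\<Sum>i. tilde (x j) (i + max M N)\<bar> < \<delta>/4" by auto
    then show ?thesis by (intro exI[of _ "max M N"]) auto
  qed
  qed
  then obtain Nf where NF: "\<And>j M. M \<le> Nf j M \<and> (\<Sum>i. tilde (x j) (i + Nf j M)) < \<delta>/4"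
    by blast
  define step where "step = (\<lambda>(N::nat, C::nat\<Rightarrow>real, K::nat\<Rightarrow>nat).
     (Nf (jf N (Jf N C K)) (Mf N (Jf N C K)),
      \<lambda>n. if n < N then C n else if n < Mf N (Jf N C K) then cf N (Jf N C K) n else 0,
      \<lambda>n. if n < N then K n else if n < Mf N (Jf N C K) then kf N (Jf N C K) n else n))"
  define st where "st = rec_nat (0, \<lambda>_. 0, \<lambda>n. n) (\<lambda>_ s. step s)"
  define Ns where "Ns i = fst (st i)" for i
  define Cs where "Cs i = fst (snd (st i))" for i
  define Ks where "Ks i = snd (snd (st i))" for i
  define Ji where "Ji i = Jf (Ns i) (Cs i) (Ks i)" for i
  define js where "js i = jf (Ns i) (Ji i)" for i
  define Ms where "Ms i = Mf (Ns i) (Ji i)" for i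
  have sti: "st i = (Ns i, Cs i, Ks i)" for i by (simp add: Ns_def Cs_def Ks_def)
  have stS: "st (Suc i) = step (st i)" for i by (simp add: st_def)
  have NsS: "Ns (Suc i) = Nf (js i) (Ms i)" for i
    using stS[of i] unfolding sti step_def js_def Ms_def Ji_def by simp
  have CsS: "Cs (Suc i) n = (if n < Ns i then Cs i n else if n < Ms i then cf (Ns i) (Ji i) n else 0)" for i n
    using stS[of i] unfolding sti step_def js_def Ms_def Ji_def by simp
  have KsS: "Ks (Suc i) n = (if n < Ns i then Ks i n else if n < Ms i then kf (Ns i) (Ji i) n else n)" for i n
    using stS[of i] unfolding sti step_def js_def Ms_def Ji_def by simp
  have Cs0: "Cs 0 = (\<lambda>_. 0)" and Ks0: "Ks 0 = (\<lambda>n. n)" and Ns0: "Ns 0 = 0"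
    by (simp_all add: Cs_def Ks_def Ns_def st_def)
  have Nlt: "Ns i < Ns (Suc i)" for i
    using HF[where N="Ns i" and J="Ji i"] NF[where j="js i" and M="Ms i"] unfolding NsS Ms_def by linarith
  have Nmono: "Ns i \<le> Ns i'" if "i \<le> i'" for i i'
    by (rule lift_Suc_mono_le[of Ns, OF _ that]) (use Nlt in \<open>auto intro: less_imp_le\<close>)
  have Nge: "i \<le> Ns i" for i
    by (induction i) (auto simp: Ns0 intro: Suc_leI order.strict_trans1[OF _ Nlt])
  have jsge: "i \<le> js i" for i
    using Nge[of i] JF[where N="Ns i" and C="Cs i" and K="Ks i"] HF[where N="Ns i" and J="Ji i"] unfolding js_def Ji_def by linarith
  have Cb: "\<bar>Cs i n\<bar> \<le> 1" for i n
    by (induction i arbitrary: n) (use HF in \<open>auto simp: Cs0 CsS\<close>)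
  have Kg: "n \<le> Ks i n" for i n
    by (induction i arbitrary: n) (use HF in \<open>auto simp: Ks0 KsS\<close>)
  have cons: "Cs i' n = Cs i n \<and> Ks i' n = Ks i n" if "i \<le> i'" "n < Ns i" for i i' n
    using that(1)
  proof (induction i' rule: dec_induct)
    case base then show ?case by simp
  next
    case (step m)
    have "n < Ns m" using that(2) Nmono[OF step(1)] by linarith
    then show ?case using step(3) by (simp add: CsS KsS)
  qed
  define cinf where "cinf n = Cs (Suc n) n" for n
  define kinf where "kinf n = Ks (Suc n) n" for n
  have agree: "cinf n = Cs i n \<and> kinf n = Ks i n" if "n < Ns i" for n i
  proof (cases "i \<le> Suc n")
    case True then show ?thesis using cons[OF True that] by (simp add: cinf_def kinf_def)
  next
    case False
    have "n < Ns (Suc n)" using Nge[of "Suc n"] by linarith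
    then show ?thesis using cons[of "Suc n" i n] False by (simp add: cinf_def kinf_def)
  qed
  define \<phi> where "\<phi> = (\<lambda>a. \<Sum>n. cinf n * a (kinf n))"
  have cb: "\<bar>cinf n\<bar> \<le> 1" and kg: "n \<le> kinf n" for n
    using Cb Kg by (auto simp: cinf_def kinf_def)
  note FD = func_dual[of cinf kinf, OF cb kg]
  have dual: "\<phi> \<in> tandori_dual" using FD(1) by (simp add: \<phi>_def)
  have big: "\<delta>/2 \<le> \<phi> (x (js i))" for i
  proof -
    define a where "a = x (js i)"
    define f where "f = (\<lambda>n. cinf n * a (kinf n))"
    define N where "N = Ns i"
    define N' where "N' = Ns (Suc i)"
    define M where "M = Ms i"
    have a: "a \<in> tandori_space" using sp by (simp add: a_def)
    have sf: "summable f" using FD(3)[OF a] by (simp add: f_def)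
    have NM: "N < M" "M \<le> N'"
      using HF[where N="Ns i" and J="Ji i"] NF[where j="js i" and M="Ms i"] by (auto simp: N_def M_def N'_def NsS Ms_def)
    have split: "\<phi> a = (\<Sum>n. f (n + N')) + (\<Sum>n<N'. f n)"
      using suminf_split_initial_segment[OF sf, of N'] by (simp add: \<phi>_def f_def)
    have tail: "\<bar>\<Sum>n. f (n + N')\<bar> < \<delta>/4"
    proof -
      have s1: "summable (\<lambda>n. \<bar>f (n + N')\<bar>)"
        by (rule summable_comparison_test[of _ "\<lambda>n. tilde a (n + N')"])
           (use FD(2)[OF a] summable_ignore_initial_segment[OF sp_summable[OF a]] in \<open>auto simp: f_def\<close>)
      have "\<bar>\<Sum>n. f (n + N')\<bar> \<le> (\<Sum>n. \<bar>f (n + N')\<bar>)" by (rule summable_rabs[OF s1])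
      also have "\<dots> \<le> (\<Sum>n. tilde a (n + N'))"
        by (rule suminf_le) (use FD(2)[OF a] s1 summable_ignore_initial_segment[OF sp_summable[OF a]] in \<open>auto simp: f_def\<close>)
      also have "\<dots> < \<delta>/4" using NF[where j="js i" and M="Ms i"] by (simp add: a_def N'_def NsS M_def)
      finally show ?thesis .
    qed
    define g where "g = (\<lambda>n. Cs (Suc i) n * a (Ks (Suc i) n))"
    have fg: "(\<Sum>n<N'. f n) = (\<Sum>n<N'. g n)"
      by (rule sum.cong) (use agree in \<open>auto simp: f_def g_def N'_def\<close>)
    have "(\<Sum>n<N'. g n) = (\<Sum>n\<in>{0..<N}. g n) + (\<Sum>n\<in>{N..<M}. g n) + (\<Sum>n\<in>{M..<N'}. g n)"
      using NM by (simp add: lessThan_atLeast0 sum.atLeastLessThan_concat)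
    also have "(\<Sum>n\<in>{0..<N}. g n) = (\<Sum>n<Ns i. Cs i n * x (js i) (Ks i n))"
      by (rule sum.cong) (auto simp: g_def N_def CsS KsS a_def)
    also have "(\<Sum>n\<in>{N..<M}. g n) = (\<Sum>n\<in>{Ns i..<Mf (Ns i) (Ji i)}. cf (Ns i) (Ji i) n * x (jf (Ns i) (Ji i)) (kf (Ns i) (Ji i) n))"
      by (rule sum.cong) (auto simp: g_def N_def M_def Ms_def CsS KsS a_def js_def)
    also have "(\<Sum>n\<in>{M..<N'}. g n) = 0"
      by (rule sum.neutral) (use NM in \<open>auto simp: g_def M_def CsS N_def\<close>)
    finally have geq: "(\<Sum>n<N'. g n) = (\<Sum>n<Ns i. Cs i n * x (js i) (Ks i n)) +
       (\<Sum>n\<in>{Ns i..<Mf (Ns i) (Ji i)}. cf (Ns i) (Ji i) n * x (jf (Ns i) (Ji i)) (kf (Ns i) (Ji i) n))" by simp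
    have head: "\<bar>\<Sum>n<Ns i. Cs i n * x (js i) (Ks i n)\<bar> < \<delta>/4"
      using JF[where N="Ns i" and C="Cs i" and K="Ks i"] HF[where N="Ns i" and J="Ji i"] by (simp add: js_def Ji_def)
    have mid: "\<delta> \<le> (\<Sum>n\<in>{Ns i..<Mf (Ns i) (Ji i)}. cf (Ns i) (Ji i) n * x (jf (Ns i) (Ji i)) (kf (Ns i) (Ji i) n))"
      using HF by blast
    show ?thesis using split tail fg geq head mid by (simp add: a_def)
  qed
  have "\<not> (\<lambda>j. \<phi> (x j)) \<longlonglongrightarrow> 0"
  proof
    assume "(\<lambda>j. \<phi> (x j)) \<longlonglongrightarrow> 0"
    then obtain no where "\<forall>j\<ge>no. norm (\<phi> (x j) - 0) < \<delta>/2"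
      using dpos unfolding LIMSEQ_iff by (metis half_gt_zero)
    then have "\<bar>\<phi> (x (js no))\<bar> < \<delta>/2" using jsge[of no] by auto
    then show False using big[of no] by linarith
  qed
  then show ?thesis using dual by blast
qed

lemma norm_nonneg_t: "a \<in> tandori_space \<Longrightarrow> 0 \<le> tandori_norm a"
  unfolding tandori_norm_def by (rule suminf_nonneg) (auto simp: sp_summable tilde_nonneg)

theorem theorem1:
  fixes x :: "nat \<Rightarrow> nat \<Rightarrow> real"
  assumes "tandori_weakly_null x"
  shows "(\<lambda>j. tandori_norm (x j)) \<longlonglongrightarrow> 0"
proof (rule ccontr)
  assume nt: "\<not> (\<lambda>j. tandori_norm (x j)) \<longlonglongrightarrow> 0"
  have sp: "\<And>j. x j \<in> tandori_space" and wn: "\<And>\<phi>. \<phi> \<in> tandori_dual \<Longrightarrow> (\<lambda>j. \<phi> (x j)) \<longlonglongrightarrow> 0"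
    using assms unfolding tandori_weakly_null_def by auto
  have coord: "\<And>k. (\<lambda>j. x j k) \<longlonglongrightarrow> 0"
    using wn[OF coord_dual] by simp
  obtain \<epsilon> where epos: "\<epsilon> > 0" and freq: "\<And>J. \<exists>j\<ge>J. \<epsilon> \<le> tandori_norm (x j)"
  proof -
    from nt obtain r where "r > 0" "\<forall>no. \<exists>n\<ge>no. \<not> norm (tandori_norm (x n) - 0) < r"
      unfolding LIMSEQ_iff by blast
    then show ?thesis using that[of r] norm_nonneg_t[OF sp] by force
  qed
  have smallcoords: "\<exists>J'. \<forall>j\<ge>J'. \<forall>k<N. \<bar>x j k\<bar> < \<eta>" if eta0: "\<eta> > 0" for N \<eta>
  proof -
    have "(\<lambda>j. \<Sum>k<N. \<bar>x j k\<bar>) \<longlonglongrightarrow> 0"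
      by (rule tendsto_null_sum) (auto intro: tendsto_rabs_zero coord)
    then obtain no where no: "\<forall>j\<ge>no. norm ((\<Sum>k<N. \<bar>x j k\<bar>) - 0) < \<eta>"
      using eta0 unfolding LIMSEQ_iff by blast
    have "\<bar>x j k\<bar> < \<eta>" if "j \<ge> no" "k < N" for j k
    proof -
      have "\<bar>x j k\<bar> \<le> (\<Sum>k<N. \<bar>x j k\<bar>)" by (rule member_le_sum) (use that in auto)
      also have "\<dots> < \<eta>" using no that by auto
      finally show ?thesis .
    qed
    then show ?thesis by blast
  qed
  have "\<exists>\<delta>>0. \<forall>N J. \<exists>j M c \<kappa>. J \<le> j \<and> N < M \<and> (\<forall>n. \<bar>c n\<bar> \<le> 1) \<and> (\<forall>n. n \<le> \<kappa> n) \<and>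
              \<delta> \<le> (\<Sum>n\<in>{N..<M}. c n * x j (\<kappa> n))"
  proof (cases "\<exists>\<eta>>0. \<forall>J. \<exists>j\<ge>J. \<eta> < tilde (x j) 0")
    case True
    then obtain \<eta> where eta: "\<eta> > 0" "\<And>J. \<exists>j\<ge>J. \<eta> < tilde (x j) 0" by blast
    show ?thesis
    proof (intro exI[of _ \<eta>] conjI allI eta(1))
      fix N J
      obtain J' where J': "\<forall>j\<ge>J'. \<forall>k<N. \<bar>x j k\<bar> < \<eta>" using smallcoords[OF eta(1)] by blast
      obtain j where j: "j \<ge> max J J'" "\<eta> < tilde (x j) 0" using eta(2) by blast
      have "(\<eta> < (SUP k\<in>{0..}. \<bar>x j k\<bar>)) = (\<exists>k\<in>{0..}. \<eta> < \<bar>x j k\<bar>)"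
        by (rule less_cSUP_iff) (use sp_bdd[OF sp, of j 0] in auto)
      with j obtain k where k: "\<eta> < \<bar>x j k\<bar>" by (auto simp: tilde_def)
      have kN: "N \<le> k"
      proof (rule ccontr)
        assume "\<not> N \<le> k"
        then have "\<bar>x j k\<bar> < \<eta>" using J' j(1) by simp
        then show False using k by simp
      qed
      define c where "c = (\<lambda>n::nat. if 0 \<le> x j k then 1 else (-1::real))"
      define \<kappa> where "\<kappa> = (\<lambda>n::nat. if n \<le> k then k else n)"
      have "(\<Sum>n\<in>{N..<Suc k}. c n * x j (\<kappa> n)) = (\<Sum>n\<in>{N..<Suc k}. \<bar>x j k\<bar>)"
        by (rule sum.cong) (auto simp: c_def \<kappa>_def)
      also have "\<dots> = real (Suc k - N) * \<bar>x j k\<bar>" by simp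
      also have "\<dots> \<ge> 1 * \<bar>x j k\<bar>"
        by (rule mult_right_mono) (use kN in auto)
      finally have "\<eta> \<le> (\<Sum>n\<in>{N..<Suc k}. c n * x j (\<kappa> n))" using k by linarith
      moreover have "\<forall>n. \<bar>c n\<bar> \<le> 1" "\<forall>n. n \<le> \<kappa> n" by (auto simp: c_def \<kappa>_def)
      ultimately show "\<exists>j M c \<kappa>. J \<le> j \<and> N < M \<and> (\<forall>n. \<bar>c n\<bar> \<le> 1) \<and> (\<forall>n. n \<le> \<kappa> n) \<and>
              \<eta> \<le> (\<Sum>n\<in>{N..<M}. c n * x j (\<kappa> n))"
        using j kN by (intro exI[of _ j] exI[of _ "Suc k"] exI[of _ c] exI[of _ \<kappa>]) auto
    qed
  next
    case False
    then have small0: "\<And>\<eta>. \<eta> > 0 \<Longrightarrow> \<exists>J. \<forall>j\<ge>J. tilde (x j) 0 \<le> \<eta>"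
      by (auto simp: not_less) (meson not_less)
    show ?thesis
    proof (intro exI[of _ "\<epsilon>/4"] conjI allI)
      show "\<epsilon>/4 > 0" using epos by simp
      fix N J
      obtain J1 where J1: "\<forall>j\<ge>J1. tilde (x j) 0 \<le> \<epsilon> / (4 * (real N + 1))"
        using small0[of "\<epsilon> / (4 * (real N + 1))"] epos by auto
      obtain j where j: "j \<ge> max J J1" "\<epsilon> \<le> tandori_norm (x j)" using freq by blast
      define a where "a = x j"
      have a: "a \<in> tandori_space" using sp by (simp add: a_def)
      have t0: "tilde a 0 \<le> \<epsilon> / (4 * (real N + 1))" using J1 j by (simp add: a_def)
      have "(\<Sum>n<N. tilde a n) \<le> (\<Sum>n<N. tilde a 0)"
        by (rule sum_mono) (auto simp: tilde_mono[OF a])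
      also have "\<dots> = real N * tilde a 0" by simp
      also have "\<dots> \<le> real N * (\<epsilon> / (4 * (real N + 1)))" by (rule mult_left_mono[OF t0]) auto
      also have "\<dots> \<le> \<epsilon>/4" using epos by (simp add: field_simps)
      finally have head: "(\<Sum>n<N. tilde a n) \<le> \<epsilon>/4" .
      have "tandori_norm a = (\<Sum>n. tilde a (n + N)) + (\<Sum>n<N. tilde a n)"
        unfolding tandori_norm_def by (rule suminf_split_initial_segment[OF sp_summable[OF a]])
      then have tl: "\<epsilon>/2 < (\<Sum>n. tilde a (n + N))" using head j(2) epos by (simp add: a_def)
      have "(\<lambda>m. \<Sum>n<m. tilde a (n + N)) \<longlonglongrightarrow> (\<Sum>n. tilde a (n + N))"
        by (rule summable_LIMSEQ) (rule summable_ignore_initial_segment[OF sp_summable[OF a]])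
      from order_tendstoD(1)[OF this tl] obtain m where m: "\<epsilon>/2 < (\<Sum>n<m. tilde a (n + N))"
        by (auto simp: eventually_sequentially)
      define \<kappa> where "\<kappa> = (\<lambda>n. SOME k. k \<ge> n \<and> tilde a n / 2 \<le> \<bar>a k\<bar>)"
      have \<kappa>: "\<kappa> n \<ge> n \<and> tilde a n / 2 \<le> \<bar>a (\<kappa> n)\<bar>" for n
        unfolding \<kappa>_def by (rule someI_ex) (use tilde_witness[OF a] in blast)
      define c where "c = (\<lambda>n. if 0 \<le> a (\<kappa> n) then 1 else (-1::real))"
      have "(\<Sum>n<m. tilde a (n + N)) = (\<Sum>n\<in>{0..<m}. tilde a (n + N))" by (simp add: lessThan_atLeast0)
      also have "\<dots> = (\<Sum>n\<in>{0+N..<m+N}. tilde a n)" by (rule sum.shift_bounds_nat_ivl[symmetric])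
      also have "\<dots> \<le> (\<Sum>n\<in>{N..<N+m+1}. tilde a n)"
        by (rule sum_mono2) (auto simp: tilde_nonneg[OF a])
      also have "\<dots> \<le> (\<Sum>n\<in>{N..<N+m+1}. 2 * (c n * a (\<kappa> n)))"
      proof (rule sum_mono)
        fix n
        have "c n * a (\<kappa> n) = \<bar>a (\<kappa> n)\<bar>" by (simp add: c_def)
        then show "tilde a n \<le> 2 * (c n * a (\<kappa> n))" using \<kappa>[of n] by linarith
      qed
      also have "\<dots> = 2 * (\<Sum>n\<in>{N..<N+m+1}. c n * a (\<kappa> n))" by (simp add: sum_distrib_left)
      finally have "\<epsilon>/4 \<le> (\<Sum>n\<in>{N..<N+m+1}. c n * x j (\<kappa> n))" using m by (simp add: a_def)
      moreover have "\<forall>n. \<bar>c n\<bar> \<le> 1" "\<forall>n. n \<le> \<kappa> n" using \<kappa> by (auto simp: c_def)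
      ultimately show "\<exists>j M c \<kappa>. J \<le> j \<and> N < M \<and> (\<forall>n. \<bar>c n\<bar> \<le> 1) \<and> (\<forall>n. n \<le> \<kappa> n) \<and>
              \<epsilon>/4 \<le> (\<Sum>n\<in>{N..<M}. c n * x j (\<kappa> n))"
        using j by (intro exI[of _ j] exI[of _ "N+m+1"] exI[of _ c] exI[of _ \<kappa>]) auto
    qed
  qed
  then obtain \<delta> where "\<delta> > 0" and H: "\<And>N J. \<exists>j M c \<kappa>. J \<le> j \<and> N < M \<and> (\<forall>n. \<bar>c n\<bar> \<le> 1) \<and> (\<forall>n. n \<le> \<kappa> n) \<and>
              \<delta> \<le> (\<Sum>n\<in>{N..<M}. c n * x j (\<kappa> n))" by blast
  from gliding_hump[OF sp coord this(1) H] wn show False by blast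
qed

end
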